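(* Let $S=S^T\in\mathbb{R}^{n\times n}$ and $T=\begin{pmatrix}I&S\\ 0&I\end{pmatrix}\in\mathbb{R}^{2n\times 2n}$, and let $h>0$. Then each of the linear maps $x\mapsto Tx$ and $x\mapsto T^Tx$ on $\mathbb{R}^{2n}$ equals a P-SympNet of degree $2$ with time step $h$ and at most $n$ layers.
   Context: $x=(p,q)\in\mathbb{R}^{2n}$, $J=\begin{pmatrix}0&-I\\ I&0\end{pmatrix}$. A P-SympNet of degree $d$ with $k$ layers and time step $h$ is a composition $\phi^{H_k}_h\circ\cdots\circ\phi^{H_1}_h$ where $H_i(x)=\alpha_i(w_i^Tx)$ with $w_i\in\mathbb{R}^{2n}$ and $\alpha_i(z)=\sum_{j=1}^d a_{ij}z^j$ a real univariate polynomial; each layer is the exact flow of $\dot x=J\nabla H_i(x)$, given explicitly by $\phi^{H_i}_h(x)=x+h\,\alpha_i'(w_i^Tx)\,Jw_i$. *)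

theory Defs
  imports "HOL-Analysis.Analysis"
begin

text \<open>Phase space R^{2n} is represented as pairs x = (p, q) with p, q in real^'n,
  where n = CARD('n). The inner product on pairs is the standard one.\<close>

type_synonym 'n phase = "(real ^ 'n) \<times> (real ^ 'n)"

definition Jmat :: "'n::finite phase \<Rightarrow> 'n phase" where
  "Jmat x = (- snd x, fst x)"

text \<open>A layer is given by a vector w and the coefficient sequence a of
  alpha(z) = sum_{j=1..d} a j * z^j. Its exact flow for time h is
  x + h * alpha'(w . x) * J w.\<close>
definition alpha_deriv :: "nat \<Rightarrow> (nat \<Rightarrow> real) \<Rightarrow> real \<Rightarrow> real" where
  "alpha_deriv d a z = (\<Sum>j=1..d. a j * real j * z ^ (j - 1))"

definition psymp_layer :: "nat \<Rightarrow> real \<Rightarrow> ('n::finite phase \<times> (nat \<Rightarrow> real)) \<Rightarrow> 'n phase \<Rightarrow> 'n phase" where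
  "psymp_layer d h l x = x + (h * alpha_deriv d (snd l) (fst l \<bullet> x)) *\<^sub>R Jmat (fst l)"

text \<open>P-SympNet with layers [l_1, ..., l_k]: phi_{l_k} o ... o phi_{l_1}
  (the first list element is applied first).\<close>
fun psympnet :: "nat \<Rightarrow> real \<Rightarrow> ('n::finite phase \<times> (nat \<Rightarrow> real)) list \<Rightarrow> 'n phase \<Rightarrow> 'n phase" where
  "psympnet d h [] = id"
| "psympnet d h (l # ls) = psympnet d h ls \<circ> psymp_layer d h l"

definition Tmap :: "real ^ 'n ^ 'n \<Rightarrow> 'n::finite phase \<Rightarrow> 'n phase" where
  "Tmap S x = (fst x + S *v snd x, snd x)"

definition TTmap :: "real ^ 'n ^ 'n \<Rightarrow> 'n::finite phase \<Rightarrow> 'n phase" where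
  "TTmap S x = (fst x, transpose S *v fst x + snd x)"

end

theory Submission
  imports Defs
begin

lemma exists_nonzero_form:
  fixes f :: "real^'n::finite \<Rightarrow> real^'n"
  assumes lin: "linear f" and sa: "\<And>x y. f x \<bullet> y = x \<bullet> f y"
    and nz: "f x \<noteq> 0"
  shows "\<exists>u. u \<bullet> f u \<noteq> 0"
proof (rule ccontr)
  assume "\<not> ?thesis"
  hence z: "\<And>u. u \<bullet> f u = 0" by auto
  have "(x + f x) \<bullet> f (x + f x) = 0" by (rule z)
  also have "(x + f x) \<bullet> f (x + f x) = x \<bullet> f x + x \<bullet> f (f x) + f x \<bullet> f x + f x \<bullet> f (f x)"
    using linear_add[OF lin] by (simp add: inner_add_left inner_add_right)
  finally have "x \<bullet> f (f x) + f x \<bullet> f x = 0" using z[of x] z[of "f x"] by simp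
  moreover have "x \<bullet> f (f x) = f x \<bullet> f x" using sa[of x "f x"] by simp
  ultimately have "f x \<bullet> f x = 0" by simp
  thus False using nz by simp
qed

lemma decomp:
  fixes f :: "real^'n::finite \<Rightarrow> real^'n"
  assumes "linear f" and "\<And>x y. f x \<bullet> y = x \<bullet> f y"
  shows "\<exists>L. length L \<le> dim (range f) \<and>
     (\<forall>q. f q = sum_list (map (\<lambda>(c,v). (c * (v \<bullet> q)) *\<^sub>R v) L))"
  using assms
proof (induction "dim (range f)" arbitrary: f rule: less_induct)
  case less
  note lin = less.prems(1) and sa = less.prems(2)
  show ?case
  proof (cases "\<forall>x. f x = 0")
    case True
    thus ?thesis by (intro exI[of _ "[]"]) auto
  next
    case False
    then obtain x where "f x \<noteq> 0" by auto
    then obtain u where u: "u \<bullet> f u \<noteq> 0" using exists_nonzero_form[OF lin sa] by blast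
    define v where "v = f u"
    define c where "c = 1 / (u \<bullet> f u)"
    define g where "g = (\<lambda>q. f q - (c * (v \<bullet> q)) *\<^sub>R v)"
    have ling: "linear g"
      unfolding g_def
      by (intro linearI) (auto simp: linear_add[OF lin] linear_scale[OF lin] inner_add_right
            algebra_simps scaleR_add_left)
    have sag: "\<And>x y. g x \<bullet> y = x \<bullet> g y"
      unfolding g_def using sa by (simp add: inner_diff_left inner_diff_right inner_commute)
    have gu: "g u = 0"
      using u unfolding g_def c_def v_def by (simp add: inner_commute)
    have rg: "range g \<subseteq> range f"
    proof
      fix y assume "y \<in> range g"
      then obtain q where "y = g q" by auto
      hence "y = f (q - (c * (v \<bullet> q)) *\<^sub>R u)"
        unfolding g_def v_def by (simp add: linear_diff[OF lin] linear_scale[OF lin])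
      thus "y \<in> range f" by auto
    qed
    have sub: "subspace {y. y \<bullet> u = 0}"
      by (auto simp: subspace_def inner_add_left)
    have "range g \<subseteq> {y. y \<bullet> u = 0}"
      using sag gu by auto
    hence sp: "span (range g) \<subseteq> {y. y \<bullet> u = 0}"
      using span_minimal[OF _ sub] by blast
    have "v \<notin> span (range g)"
      using sp u unfolding v_def by (auto simp: inner_commute)
    moreover have "v \<in> span (range f)" unfolding v_def by (simp add: span_base)
    moreover have "span (range g) \<subseteq> span (range f)" using rg by (rule span_mono)
    ultimately have "span (range g) \<subset> span (range f)" by blast
    hence lt: "dim (range g) < dim (range f)" by (rule dim_psubset)
    obtain L where L: "length L \<le> dim (range g)"
      "\<forall>q. g q = sum_list (map (\<lambda>(c,v). (c * (v \<bullet> q)) *\<^sub>R v) L)"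
      using less.hyps[OF lt ling sag] by blast
    show ?thesis
    proof (intro exI[of _ "(c,v) # L"] conjI allI)
      show "length ((c, v) # L) \<le> dim (range f)" using L(1) lt by simp
      fix q
      have "f q = g q + (c * (v \<bullet> q)) *\<^sub>R v" unfolding g_def by simp
      thus "f q = sum_list (map (\<lambda>(c,v). (c * (v \<bullet> q)) *\<^sub>R v) ((c, v) # L))"
        using L(2) by (simp add: add.commute)
    qed
  qed
qed

lemma alpha2: "alpha_deriv 2 (\<lambda>j. if j = 2 then k else 0) z = 2 * k * z"
  by (simp add: alpha_deriv_def numeral_2_eq_2)

definition mkT :: "real \<Rightarrow> real \<times> (real^'n) \<Rightarrow> 'n::finite phase \<times> (nat \<Rightarrow> real)" where
  "mkT h cv = ((0, snd cv), (\<lambda>j. if j = 2 then - fst cv / (2*h) else 0))"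

definition mkTT :: "real \<Rightarrow> real \<times> (real^'n) \<Rightarrow> 'n::finite phase \<times> (nat \<Rightarrow> real)" where
  "mkTT h cv = ((snd cv, 0), (\<lambda>j. if j = 2 then fst cv / (2*h) else 0))"

lemma netT:
  assumes "h > 0"
  shows "psympnet 2 h (map (mkT h) L) x =
    (fst x + sum_list (map (\<lambda>(c,v). (c * (v \<bullet> snd x)) *\<^sub>R v) L), snd x)"
proof (induction L arbitrary: x)
  case Nil then show ?case by simp
next
  case (Cons cv L)
  obtain c v where cv: "cv = (c, v)" by force
  have lay: "psymp_layer 2 h (mkT h (c, v)) x = (fst x + (c * (v \<bullet> snd x)) *\<^sub>R v, snd x)"
    using assms unfolding psymp_layer_def mkT_def Jmat_def
    by (cases x) (simp add: alpha2 inner_commute)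
  show ?case using Cons[of "psymp_layer 2 h (mkT h cv) x"] by (simp add: lay cv add.assoc)
qed

lemma netTT:
  assumes "h > 0"
  shows "psympnet 2 h (map (mkTT h) L) x =
    (fst x, snd x + sum_list (map (\<lambda>(c,v). (c * (v \<bullet> fst x)) *\<^sub>R v) L))"
proof (induction L arbitrary: x)
  case Nil then show ?case by simp
next
  case (Cons cv L)
  obtain c v where cv: "cv = (c, v)" by force
  have lay: "psymp_layer 2 h (mkTT h (c, v)) x = (fst x, snd x + (c * (v \<bullet> fst x)) *\<^sub>R v)"
    using assms unfolding psymp_layer_def mkTT_def Jmat_def
    by (cases x) (simp add: alpha2 inner_commute)
  show ?case using Cons[of "psymp_layer 2 h (mkTT h cv) x"] by (simp add: lay cv add.assoc)
qed

theorem mainTheorem9: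
  fixes S :: "real ^ 'n::finite ^ 'n" and h :: real
  assumes "transpose S = S" and "h > 0"
  shows "(\<exists>ls. length ls \<le> CARD('n) \<and> psympnet 2 h ls = Tmap S)
       \<and> (\<exists>ls. length ls \<le> CARD('n) \<and> psympnet 2 h ls = TTmap S)"
proof -
  have sa: "\<And>x y. (S *v x) \<bullet> y = x \<bullet> (S *v y)"
    by (metis assms(1) dot_lmul_matrix vector_transpose_matrix)
  obtain L where L: "length L \<le> dim (range (\<lambda>x. S *v x))"
    "\<forall>q. S *v q = sum_list (map (\<lambda>(c,v). (c * (v \<bullet> q)) *\<^sub>R v) L)"
    using decomp[of "\<lambda>x. S *v x", OF matrix_vector_mul_linear sa] by blast
  have len: "length L \<le> CARD('n)" using L(1) dim_subset_UNIV_cart order_trans by blast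
  have 1: "psympnet 2 h (map (mkT h) L) = Tmap S"
  proof
    fix x show "psympnet 2 h (map (mkT h) L) x = Tmap S x"
      using L(2) netT[OF assms(2), of L x] by (simp add: Tmap_def)
  qed
  have 2: "psympnet 2 h (map (mkTT h) L) = TTmap S"
  proof
    fix x show "psympnet 2 h (map (mkTT h) L) x = TTmap S x"
      using L(2) netTT[OF assms(2), of L x] by (simp add: TTmap_def assms(1) add.commute)
  qed
  show ?thesis using 1 2 len by (metis length_map)
qed

end
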